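(* For every $\boldsymbol{\Delta}^0_2$ set $A\subseteq2^\omega$ there is a set $B\subseteq2^\omega$ with $B\equiv_W A$ such that $B$ is dualistic and $B=\Phi(C)=\Phi(U)$ for some closed set $C$ and some open set $U$.
   Context: $2^\omega$ is the Cantor space; $N_s=\{x:s\subset x\}$; $\mu$ the coin-tossing measure with $\mu(N_s)=2^{-\mathrm{lh}(s)}$. For measurable $A$ and $x\in2^\omega$, the density of $x$ in $A$ is $\mathcal D_A(x)=\lim_n\mu(A\cap N_{x\restriction n})/\mu(N_{x\restriction n})$ when the limit exists; $\Phi(A)=\{x:\mathcal D_A(x)=1\}$. A measurable set $B$ is dualistic if for every $x\in2^\omega$, $\mathcal D_B(x)$ exists and equals $0$ or $1$. $\boldsymbol{\Delta}^0_2$: sets both $F_\sigma$ and $G_\delta$. $X\equiv_W Y$ iff each is the preimage of the other under some continuous map $2^\omega\to2^\omega$. *)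

theory Defs
  imports "HOL-Probability.Probability"
begin

text \<open>Cantor space is modelled by the type nat \<Rightarrow> bool with the product
  (Tychonoff) topology of discrete bool.\<close>

type_synonym cantor = "nat \<Rightarrow> bool"

definition Nbhd :: "bool list \<Rightarrow> cantor set" where
  "Nbhd s = {x. \<forall>i < length s. x i = s ! i}"

definition restr :: "cantor \<Rightarrow> nat \<Rightarrow> bool list" where
  "restr x n = map x [0..<n]"

text \<open>Coin-tossing measure (completed, so that "measurable" means
  measurable with respect to the completion).\<close>
definition mu :: "cantor measure" where
  "mu = completion (Pi\<^sub>M UNIV (\<lambda>_. measure_pmf (bernoulli_pmf (1/2))))"

definition density_seq :: "cantor set \<Rightarrow> cantor \<Rightarrow> nat \<Rightarrow> real" where
  "density_seq A x n = measure mu (A \<inter> Nbhd (restr x n)) / measure mu (Nbhd (restr x n))"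

definition has_density :: "cantor set \<Rightarrow> cantor \<Rightarrow> real \<Rightarrow> bool" where
  "has_density A x d \<longleftrightarrow> density_seq A x \<longlonglongrightarrow> d"

definition Phi :: "cantor set \<Rightarrow> cantor set" where
  "Phi A = {x. has_density A x 1}"

definition dualistic :: "cantor set \<Rightarrow> bool" where
  "dualistic B \<longleftrightarrow> B \<in> sets mu \<and> (\<forall>x. has_density B x 0 \<or> has_density B x 1)"

definition Delta02 :: "cantor set \<Rightarrow> bool" where
  "Delta02 A \<longleftrightarrow> fsigma_in euclidean A \<and> gdelta_in euclidean A"

definition wadge_le :: "cantor set \<Rightarrow> cantor set \<Rightarrow> bool" where
  "wadge_le X Y \<longleftrightarrow> (\<exists>f :: cantor \<Rightarrow> cantor. continuous_on UNIV f \<and> X = f -` Y)"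

definition wadge_eq :: "cantor set \<Rightarrow> cantor set \<Rightarrow> bool" where
  "wadge_eq X Y \<longleftrightarrow> wadge_le X Y \<and> wadge_le Y X"

end

theory Submission
  imports Defs
begin



abbreviation P :: "cantor measure" where
  "P \<equiv> Pi\<^sub>M UNIV (\<lambda>_. measure_pmf (bernoulli_pmf (1/2)))"

definition cyl :: "nat set \<Rightarrow> cantor \<Rightarrow> cantor set" where
  "cyl J f = {z. \<forall>i\<in>J. z i = f i}"

lemma space_P[simp]: "space P = UNIV"
  by (simp add: space_PiM)

lemma prob_P: "prob_space P"
  by (intro prob_space_PiM) (simp add: prob_space_measure_pmf)

lemma prob_mu: "prob_space mu"
  unfolding mu_def using prob_P by (rule prob_space.prob_space_completion)

lemma cyl_emb: "cyl J f = prod_emb UNIV (\<lambda>_. measure_pmf (bernoulli_pmf (1/2))) J (Pi\<^sub>E J (\<lambda>i. {f i}))"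
  unfolding cyl_def prod_emb_def space_P by (rule set_eqI) (simp add: restrict_PiE_iff Pi_iff)

lemma cyl_sets_P: "finite J \<Longrightarrow> cyl J f \<in> sets P"
  unfolding cyl_emb by (intro sets_PiM_I) auto

lemma cyl_sets: "finite J \<Longrightarrow> cyl J f \<in> sets mu"
  unfolding mu_def by (rule sets_completionI_sets[OF cyl_sets_P])

lemma pmf_half: "pmf (bernoulli_pmf (1/2)) b = 1/2"
proof (cases b)
  case True then show ?thesis by (simp only: pmf_bernoulli_True)
next
  case False
  have "pmf (bernoulli_pmf (1/2)) False = 1 - 1/2" by (rule pmf_bernoulli_False) auto
  then show ?thesis using False by simp
qed

lemma emeasure_cyl_P: assumes "finite J" shows "emeasure P (cyl J f) = ennreal ((1/2) ^ card J)"
proof -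
  have "emeasure P (cyl J f) = (\<Prod>i\<in>J. emeasure (measure_pmf (bernoulli_pmf (1/2))) {f i})"
    unfolding cyl_emb
    by (rule emeasure_PiM_emb) (auto simp: prob_space_measure_pmf assms)
  also have "\<dots> = (\<Prod>i\<in>J. ennreal (1/2))"
    by (intro prod.cong refl) (simp only: emeasure_pmf_single pmf_half)
  also have "\<dots> = ennreal (1/2) ^ card J"
    by (rule prod_constant)
  also have "\<dots> = ennreal ((1/2) ^ card J)"
    by (rule ennreal_power) simp
  finally show ?thesis .
qed

lemma measure_cyl: assumes "finite J" shows "measure mu (cyl J f) = (1/2) ^ card J"
proof -
  have "measure mu (cyl J f) = measure P (cyl J f)"
    unfolding mu_def by (rule measure_completion[OF cyl_sets_P[OF assms]])
  also have "\<dots> = (1/2) ^ card J"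
    unfolding measure_def emeasure_cyl_P[OF assms] by (rule enn2real_ennreal) simp
  finally show ?thesis .
qed




lemma Nbhd_restr: "Nbhd (restr x n) = cyl {..<n} x"
  unfolding Nbhd_def restr_def cyl_def by auto

lemma in_cyl_self[simp]: "z \<in> cyl J z"
  unfolding cyl_def by auto

lemma cyl_mono: "J \<subseteq> J' \<Longrightarrow> cyl J' z \<subseteq> cyl J z"
  unfolding cyl_def by auto

lemma cyl_lessThan_mono: "n \<le> n' \<Longrightarrow> cyl {..<n'} z \<subseteq> cyl {..<n} z"
  by (rule cyl_mono) auto

lemma open_bool: "open (S::bool set)"
  by (rule discrete_topology_class.open_discrete)

lemma open_cyl: "finite J \<Longrightarrow> open (cyl J f)"
proof -
  assume "finite J"
  then have "open {g::cantor. \<forall>i\<in>J. g (id i) \<in> {f i}}"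
    by (intro product_topology_basis') (simp_all add: open_bool)
  moreover have "{g::cantor. \<forall>i\<in>J. g (id i) \<in> {f i}} = cyl J f"
    unfolding cyl_def by auto
  ultimately show ?thesis by simp
qed

lemma nbhd_open:
  assumes "\<And>z. z \<in> U \<Longrightarrow> \<exists>n. cyl {..<n} z \<subseteq> U"
  shows "open U"
proof -
  have "U = \<Union>{cyl {..<n} z | n z. cyl {..<n} z \<subseteq> U}"
  proof
    show "U \<subseteq> \<Union>{cyl {..<n} z | n z. cyl {..<n} z \<subseteq> U}"
    proof
      fix x assume "x \<in> U"
      then obtain n where n: "cyl {..<n} x \<subseteq> U" using assms by blast
      show "x \<in> \<Union>{cyl {..<n} z | n z. cyl {..<n} z \<subseteq> U}"
        by (rule UnionI[of "cyl {..<n} x"]) (use n in auto)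
    qed
  qed auto
  moreover have "open (\<Union>{cyl {..<n} z | n z. cyl {..<n} z \<subseteq> U})"
    by (rule open_Union) (auto intro: open_cyl)
  ultimately show ?thesis by simp
qed

lemma open_nbhd:
  assumes "open U" "z \<in> U"
  shows "\<exists>n. cyl {..<n} z \<subseteq> U"
proof -
  have "openin (product_topology (\<lambda>i. euclidean) UNIV) U"
    using assms(1) unfolding open_fun_def .
  from product_topology_open_contains_basis[OF this assms(2)]
  obtain X where X: "z \<in> (\<Pi>\<^sub>E i\<in>UNIV. X i)" "finite {i. X i \<noteq> topspace euclidean}"
     "(\<Pi>\<^sub>E i\<in>UNIV. X i) \<subseteq> U"
    by blast
  obtain n where n: "{i. X i \<noteq> UNIV} \<subseteq> {..<n}"
    using X(2) finite_nat_bounded by auto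
  have "cyl {..<n} z \<subseteq> (\<Pi>\<^sub>E i\<in>UNIV. X i)"
  proof
    fix y assume y: "y \<in> cyl {..<n} z"
    have "y i \<in> X i" for i
    proof (cases "i < n")
      case True
      then have "y i = z i" using y unfolding cyl_def by auto
      then show ?thesis using X(1) by auto
    next
      case False
      then have "X i = UNIV" using n by auto
      then show ?thesis by simp
    qed
    then show "y \<in> (\<Pi>\<^sub>E i\<in>UNIV. X i)" by (simp add: PiE_UNIV_domain)
  qed
  then show ?thesis using X(3) by blast
qed

lemma closed_nbhd:
  assumes "closed F" "z \<notin> F"
  shows "\<exists>n. cyl {..<n} z \<inter> F = {}"
proof -
  have "open (- F)" using assms(1) by (simp add: open_Compl)
  moreover have "z \<in> - F" using assms(2) by simp
  ultimately obtain n where "cyl {..<n} z \<subseteq> - F" using open_nbhd by blast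
  then show ?thesis by blast
qed



lemma cont_local:
  fixes f :: "cantor \<Rightarrow> cantor"
  assumes "\<And>z k. \<exists>n. \<forall>z'\<in>cyl {..<n} z. f z' k = f z k"
  shows "continuous_on UNIV f"
proof (rule continuous_on_coordinatewise_then_product)
  fix k
  show "continuous_on UNIV (\<lambda>x. f x k)"
    unfolding continuous_on_open_vimage[OF open_UNIV]
  proof (intro allI impI)
    fix V :: "bool set" assume "open V"
    show "open ((\<lambda>x. f x k) -` V \<inter> UNIV)"
    proof (rule nbhd_open)
      fix z assume z: "z \<in> (\<lambda>x. f x k) -` V \<inter> UNIV"
      obtain n where n: "\<forall>z'\<in>cyl {..<n} z. f z' k = f z k" using assms[of z k] by (elim exE)
      have "cyl {..<n} z \<subseteq> (\<lambda>x. f x k) -` V \<inter> UNIV"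
      proof
        fix y assume "y \<in> cyl {..<n} z"
        then have "f y k = f z k" using n by blast
        then show "y \<in> (\<lambda>x. f x k) -` V \<inter> UNIV" using z by simp
      qed
      then show "\<exists>n. cyl {..<n} z \<subseteq> (\<lambda>x. f x k) -` V \<inter> UNIV" by blast
    qed
  qed
qed

definition pp :: "nat \<Rightarrow> nat" where "pp n = n * n"

lemma pp_less_iff[simp]: "pp i < pp j \<longleftrightarrow> i < j"
proof
  assume "pp i < pp j"
  show "i < j"
  proof (rule ccontr)
    assume "\<not> i < j"
    then have "j \<le> i" by linarith
    then have "j * j \<le> i * i" using mult_le_mono by blast
    then show False using \<open>pp i < pp j\<close> unfolding pp_def by simp
  qed
next
  assume "i < j"
  moreover have "0 < j" using \<open>i < j\<close> by simp
  ultimately show "pp i < pp j" unfolding pp_def using mult_strict_mono[of i j i j] by simp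
qed

lemma pp_le_iff[simp]: "pp i \<le> pp j \<longleftrightarrow> i \<le> j"
  by (meson not_le pp_less_iff)

lemma pp_inj[simp]: "pp i = pp j \<longleftrightarrow> i = j"
proof
  assume e: "pp i = pp j"
  show "i = j"
  proof (rule ccontr)
    assume "i \<noteq> j"
    then have "i < j \<or> j < i" by linarith
    then show False using e pp_less_iff[of i j] pp_less_iff[of j i] by auto
  qed
qed simp

lemma le_pp: "n \<le> pp n"
  unfolding pp_def by (simp add: le_square)

definition blk :: "nat \<Rightarrow> nat" where "blk l = (LEAST j. l \<le> pp j)"

lemma blk_iff: "pp j < l \<longleftrightarrow> j < blk l"
proof
  have ex: "l \<le> pp (blk l)" unfolding blk_def by (rule LeastI[of _ l]) (rule le_pp)
  assume "pp j < l"
  show "j < blk l"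
  proof (rule ccontr)
    assume "\<not> j < blk l"
    then have "pp (blk l) \<le> pp j" by simp
    then show False using ex \<open>pp j < l\<close> by linarith
  qed
next
  assume "j < blk l"
  then have "\<not> l \<le> pp j" unfolding blk_def by (rule not_less_Least)
  then show "pp j < l" by simp
qed

lemma blk_ge: "l \<le> pp (blk l)"
  using blk_iff[of "blk l" l] by simp

lemma blk_mono: "l \<le> l' \<Longrightarrow> blk l \<le> blk l'"
  by (metis blk_iff leI le_less_trans order_less_irrefl)

lemma blk_unique: "(\<And>j. pp j < l \<longleftrightarrow> j < m) \<Longrightarrow> blk l = m"
  by (metis blk_iff linorder_neqE_nat order_less_irrefl)

lemma blk_pp: "blk (pp n) = n"
  by (rule blk_unique) simp

lemma not_square:
  assumes "pp n < i" "i < pp (Suc n)" shows "i \<notin> range pp"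
proof
  assume "i \<in> range pp"
  then obtain m where m: "i = pp m" by auto
  have "n < m" using assms(1) unfolding m by simp
  moreover have "m < Suc n" using assms(2) unfolding m by simp
  ultimately show False by simp
qed

lemma blk_tends: "filterlim blk at_top sequentially"
  unfolding filterlim_at_top eventually_sequentially
proof (intro allI)
  fix Z
  have "\<forall>l\<ge>Suc (pp Z). Z \<le> blk l"
  proof (intro allI impI)
    fix l assume "Suc (pp Z) \<le> l"
    then have "pp Z < l" by simp
    then have "Z < blk l" by (simp add: blk_iff)
    then show "Z \<le> blk l" by simp
  qed
  then show "\<exists>N. \<forall>l\<ge>N. Z \<le> blk l" by blast
qed




interpretation MU: prob_space mu by (rule prob_mu)

definition K :: "cantor set" where "K = {z. \<forall>i. i \<notin> range pp \<longrightarrow> \<not> z i}"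
definition fb :: "cantor \<Rightarrow> nat" where "fb z = (LEAST i. i \<notin> range pp \<and> z i)"
definition dec :: "cantor \<Rightarrow> cantor" where "dec z = (\<lambda>n. z (pp n))"
definition node :: "cantor \<Rightarrow> bool list" where "node z = restr (dec z) (blk (fb z) - 1)"
definition hh :: "cantor \<Rightarrow> cantor" where "hh x = (\<lambda>i. \<exists>n. pp n = i \<and> x n)"

lemma length_restr[simp]: "length (restr x n) = n"
  unfolding restr_def by simp

lemma nth_restr[simp]: "i < n \<Longrightarrow> restr x n ! i = x i"
  unfolding restr_def by simp

lemma restr_eq_iff: "restr x n = restr y n \<longleftrightarrow> (\<forall>i<n. x i = y i)"
  unfolding restr_def by (simp add: atLeast0LessThan lessThan_iff Ball_def)

lemma fb_props:
  assumes "z \<notin> K"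
  shows "fb z \<notin> range pp" "z (fb z)" "\<And>i. i < fb z \<Longrightarrow> i \<notin> range pp \<Longrightarrow> \<not> z i"
proof -
  have ex: "\<exists>i. i \<notin> range pp \<and> z i" using assms unfolding K_def by blast
  have "fb z \<notin> range pp \<and> z (fb z)" unfolding fb_def using ex by (rule LeastI_ex)
  then show "fb z \<notin> range pp" "z (fb z)" by auto
  fix i assume "i < fb z" "i \<notin> range pp"
  then show "\<not> z i" unfolding fb_def using not_less_Least by blast
qed

lemma fb_le: "i \<notin> range pp \<Longrightarrow> z i \<Longrightarrow> fb z \<le> i"
  unfolding fb_def by (rule Least_le) simp

lemma notK_iff: "z \<notin> K \<longleftrightarrow> (\<exists>i. i \<notin> range pp \<and> z i)"
  unfolding K_def by blast

lemma local_notK: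
  assumes "z \<notin> K" "z' \<in> cyl {..<Suc (fb z)} z"
  shows "z' \<notin> K" "fb z' = fb z" "node z' = node z"
proof -
  have agree: "\<And>i. i \<le> fb z \<Longrightarrow> z' i = z i" using assms(2) unfolding cyl_def by auto
  have "z' (fb z)" using agree fb_props(2)[OF assms(1)] by simp
  then show nK: "z' \<notin> K" using fb_props(1)[OF assms(1)] unfolding notK_iff by blast
  have le: "fb z' \<le> fb z" using fb_le[of "fb z" z'] fb_props(1)[OF assms(1)] \<open>z' (fb z)\<close> by blast
  show fbeq: "fb z' = fb z"
  proof (rule ccontr)
    assume "fb z' \<noteq> fb z"
    then have lt: "fb z' < fb z" using le by simp
    have "z' (fb z')" by (rule fb_props(2)[OF nK])
    then have "z (fb z')" using agree lt by simp
    then show False using fb_props(3)[OF assms(1) lt fb_props(1)[OF nK]] by simp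
  qed
  have "\<And>j. j < blk (fb z) - 1 \<Longrightarrow> dec z' j = dec z j"
  proof -
    fix j assume "j < blk (fb z) - 1"
    then have "pp j < fb z" by (simp add: blk_iff)
    then show "dec z' j = dec z j" unfolding dec_def using agree by simp
  qed
  then show "node z' = node z" unfolding node_def fbeq by (simp add: restr_eq_iff)
qed

lemma hh_K: "hh x \<in> K"
  unfolding K_def hh_def by auto

lemma dec_hh[simp]: "dec (hh x) = x"
  unfolding dec_def hh_def by auto

lemma hh_cont: "continuous_on UNIV hh"
proof (rule cont_local)
  fix z :: cantor and k
  have "\<forall>z'\<in>cyl {..<Suc k} z. hh z' k = hh z k"
  proof
    fix z' assume z': "z' \<in> cyl {..<Suc k} z"
    have "\<And>n. pp n = k \<Longrightarrow> z' n = z n"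
    proof -
      fix n assume "pp n = k"
      then have "n \<le> k" using le_pp[of n] by simp
      then show "z' n = z n" using z' unfolding cyl_def by simp
    qed
    then show "hh z' k = hh z k" unfolding hh_def by auto
  qed
  then show "\<exists>n. \<forall>z'\<in>cyl {..<n} z. hh z' k = hh z k" by blast
qed

lemma two_notin: "(2::nat) \<notin> range pp"
  by (rule not_square[of 1]) (simp_all add: pp_def)

lemma K_sets: "K \<in> sets mu"
proof -
  have "K = (\<Inter>i\<in>- range pp. cyl {i} (\<lambda>_. False))"
    unfolding K_def cyl_def by auto
  moreover have "(\<Inter>i\<in>- range pp. cyl {i} (\<lambda>_. False)) \<in> sets mu"
    using two_notin by (intro sets.countable_INT) (auto intro: cyl_sets)
  ultimately show ?thesis by simp
qed

lemma K_measure: "measure mu K = 0"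
proof -
  have bound: "measure mu K \<le> (1/2) ^ m" for m
  proof -
    let ?J = "{pp m<..<pp (Suc m)}"
    have "K \<subseteq> cyl ?J (\<lambda>_. False)"
      unfolding K_def cyl_def using not_square[of m] by auto
    then have "measure mu K \<le> measure mu (cyl ?J (\<lambda>_. False))"
      by (intro MU.finite_measure_mono cyl_sets) auto
    also have "\<dots> = (1/2) ^ card ?J" by (rule measure_cyl) simp
    also have "card ?J = 2 * m" unfolding pp_def by simp
    also have "(1/2::real) ^ (2 * m) \<le> (1/2) ^ m" by (rule power_decreasing) auto
    finally show ?thesis .
  qed
  have "(\<lambda>m. (1/2::real) ^ m) \<longlonglongrightarrow> 0" by (rule LIMSEQ_power_zero) simp
  then have "measure mu K \<le> 0" using bound by (intro LIMSEQ_le_const) auto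
  then show ?thesis using measure_nonneg[of mu K] by linarith
qed

lemma K_null: "K \<in> null_sets mu"
  using K_sets K_measure by (simp add: MU.emeasure_eq_measure null_sets_def)




lemma Nbhd_nonempty: "\<exists>z. z \<in> Nbhd s"
  by (rule exI[of _ "\<lambda>i. if i < length s then s ! i else False"]) (simp add: Nbhd_def)

lemma eventually_disjoint:
  assumes "closed S" "x \<notin> S"
  shows "eventually (\<lambda>n. cyl {..<n} x \<inter> S = {}) sequentially"
proof -
  obtain n0 where n0: "cyl {..<n0} x \<inter> S = {}" using closed_nbhd[OF assms] by blast
  show ?thesis unfolding eventually_sequentially
  proof (intro exI allI impI)
    fix n assume "n0 \<le> n"
    then have "cyl {..<n} x \<subseteq> cyl {..<n0} x" by (rule cyl_lessThan_mono)
    then show "cyl {..<n} x \<inter> S = {}" using n0 by blast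
  qed
qed

locale constr =
  fixes A :: "cantor set" and F G :: "nat \<Rightarrow> cantor set"
  assumes F_closed: "\<And>i. closed (F i)" and G_closed: "\<And>i. closed (G i)"
    and A_F: "A = (\<Union>i. F i)" and A_G: "- A = (\<Union>i. G i)"
begin

definition c :: "bool list \<Rightarrow> bool" where
  "c s \<longleftrightarrow> (\<exists>i\<le>length s. Nbhd s \<inter> F i \<noteq> {} \<and> (\<forall>j<i. Nbhd s \<inter> G j = {})) \<or>
          ((\<forall>i\<le>length s. Nbhd s \<inter> F i = {} \<and> Nbhd s \<inter> G i = {}) \<and> Nbhd s \<inter> A \<noteq> {})"

lemma F_sub: "F i \<subseteq> A" using A_F by blast
lemma G_sub: "G i \<subseteq> - A" using A_G by blast

lemma c_wit: "\<exists>z. z \<in> Nbhd s \<and> (z \<in> A \<longleftrightarrow> c s)"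
proof (cases "c s")
  case True
  then consider (a) i where "Nbhd s \<inter> F i \<noteq> {}" | (b) "Nbhd s \<inter> A \<noteq> {}"
    unfolding c_def by blast
  then show ?thesis
  proof cases
    case a
    then obtain z where "z \<in> Nbhd s" "z \<in> F i" by blast
    then show ?thesis using F_sub True by blast
  next
    case b
    then show ?thesis using True by blast
  qed
next
  case False
  show ?thesis
  proof (cases "\<exists>j\<le>length s. Nbhd s \<inter> G j \<noteq> {}")
    case True
    then obtain j z where "z \<in> Nbhd s" "z \<in> G j" by blast
    then show ?thesis using G_sub False by blast
  next
    case nG: False
    have nF: "\<forall>i\<le>length s. Nbhd s \<inter> F i = {}"
    proof (intro allI impI)
      fix i assume "i \<le> length s"
      show "Nbhd s \<inter> F i = {}"
      proof (rule ccontr)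
        assume "Nbhd s \<inter> F i \<noteq> {}"
        moreover have "\<forall>j<i. Nbhd s \<inter> G j = {}" using nG \<open>i \<le> length s\<close> by auto
        ultimately have "c s" unfolding c_def using \<open>i \<le> length s\<close> by blast
        then show False using False by simp
      qed
    qed
    have "Nbhd s \<inter> A = {}"
    proof (rule ccontr)
      assume "Nbhd s \<inter> A \<noteq> {}"
      then have "c s" unfolding c_def using nF nG by auto
      then show False using False by simp
    qed
    moreover obtain z where "z \<in> Nbhd s" using Nbhd_nonempty by blast
    ultimately show ?thesis using False by blast
  qed
qed

lemma c_lim: "\<exists>N. \<forall>n\<ge>N. c (restr x n) = (x \<in> A)"
proof (cases "x \<in> A")
  case True
  then obtain i0 where i0: "x \<in> F i0" using A_F by blast
  have "\<forall>j\<in>{..<i0}. eventually (\<lambda>n. cyl {..<n} x \<inter> G j = {}) sequentially"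
    using G_closed G_sub True by (auto intro!: eventually_disjoint)
  then have ev1: "eventually (\<lambda>n. \<forall>j\<in>{..<i0}. cyl {..<n} x \<inter> G j = {}) sequentially"
    by (intro eventually_ball_finite) auto
  have ev2: "eventually (\<lambda>n. i0 \<le> n) sequentially" by (rule eventually_ge_at_top)
  have "eventually (\<lambda>n. c (restr x n)) sequentially"
    using ev1 ev2
  proof eventually_elim
    case (elim n)
    have "x \<in> Nbhd (restr x n) \<inter> F i0" using i0 by (simp add: Nbhd_restr)
    then have a: "Nbhd (restr x n) \<inter> F i0 \<noteq> {}" by blast
    have b: "\<forall>j<i0. Nbhd (restr x n) \<inter> G j = {}" using elim(1) by (simp add: Nbhd_restr)
    have "i0 \<le> length (restr x n)" using elim(2) by simp
    then show ?case unfolding c_def using a b by blast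
  qed
  then show ?thesis using True unfolding eventually_sequentially by auto
next
  case False
  then obtain j0 where j0: "x \<in> G j0" using A_G by blast
  have "\<forall>i\<in>{..j0}. eventually (\<lambda>n. cyl {..<n} x \<inter> F i = {}) sequentially"
    using F_closed F_sub False by (auto intro!: eventually_disjoint)
  then have ev1: "eventually (\<lambda>n. \<forall>i\<in>{..j0}. cyl {..<n} x \<inter> F i = {}) sequentially"
    by (intro eventually_ball_finite) auto
  have ev2: "eventually (\<lambda>n. j0 \<le> n) sequentially" by (rule eventually_ge_at_top)
  have "eventually (\<lambda>n. \<not> c (restr x n)) sequentially"
    using ev1 ev2
  proof eventually_elim
    case (elim n)
    have xG: "x \<in> Nbhd (restr x n) \<inter> G j0" using j0 by (simp add: Nbhd_restr)
    have 1: "\<not> (\<exists>i\<le>n. Nbhd (restr x n) \<inter> F i \<noteq> {} \<and> (\<forall>j<i. Nbhd (restr x n) \<inter> G j = {}))"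
    proof
      assume "\<exists>i\<le>n. Nbhd (restr x n) \<inter> F i \<noteq> {} \<and> (\<forall>j<i. Nbhd (restr x n) \<inter> G j = {})"
      then obtain i where i: "Nbhd (restr x n) \<inter> F i \<noteq> {}" "\<forall>j<i. Nbhd (restr x n) \<inter> G j = {}"
        by blast
      have "\<not> i \<le> j0" using i(1) elim(1) by (auto simp: Nbhd_restr)
      then have "j0 < i" by simp
      then show False using i(2) xG by blast
    qed
    have 2: "\<not> (\<forall>i\<le>n. Nbhd (restr x n) \<inter> F i = {} \<and> Nbhd (restr x n) \<inter> G i = {})"
      using xG elim(2) by blast
    show ?case using 1 2 unfolding c_def by simp
  qed
  then show ?thesis using False unfolding eventually_sequentially by auto
qed

definition w :: "bool list \<Rightarrow> cantor" where
  "w s = (SOME z. z \<in> Nbhd s \<and> (z \<in> A \<longleftrightarrow> c s))"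

lemma w_prop: "w s \<in> Nbhd s" "w s \<in> A \<longleftrightarrow> c s"
  using someI_ex[OF c_wit[of s]] unfolding w_def by blast+

definition g :: "cantor \<Rightarrow> cantor" where
  "g z = (if z \<in> K then dec z else w (node z))"

definition B :: "cantor set" where "B = g -` A"

lemma B_K: "z \<in> K \<Longrightarrow> z \<in> B \<longleftrightarrow> dec z \<in> A"
  unfolding B_def g_def by simp

lemma B_nK: "z \<notin> K \<Longrightarrow> z \<in> B \<longleftrightarrow> c (node z)"
  unfolding B_def g_def using w_prop by simp

lemma g_cont: "continuous_on UNIV g"
proof (rule cont_local)
  fix z k
  show "\<exists>n. \<forall>z'\<in>cyl {..<n} z. g z' k = g z k"
  proof (cases "z \<in> K")
    case False
    have "\<forall>z'\<in>cyl {..<Suc (fb z)} z. g z' k = g z k"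
    proof
      fix z' assume z': "z' \<in> cyl {..<Suc (fb z)} z"
      have "z' \<notin> K" "node z' = node z" using local_notK[OF False z'] by auto
      then show "g z' k = g z k" unfolding g_def using False by simp
    qed
    then show ?thesis by blast
  next
    case True
    have "\<forall>z'\<in>cyl {..<Suc (pp (Suc k))} z. g z' k = g z k"
    proof
      fix z' assume z': "z' \<in> cyl {..<Suc (pp (Suc k))} z"
      then have agree: "\<And>i. i \<le> pp (Suc k) \<Longrightarrow> z' i = z i" unfolding cyl_def by auto
      have ppk: "pp k \<le> pp (Suc k)" by simp
      show "g z' k = g z k"
      proof (cases "z' \<in> K")
        case True
        then show ?thesis using \<open>z \<in> K\<close> agree[OF ppk] unfolding g_def dec_def by simp
      next
        case nK: False
        have i1: "fb z' \<notin> range pp" "z' (fb z')" using fb_props[OF nK] by auto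
        have "\<not> fb z' \<le> pp (Suc k)"
        proof
          assume "fb z' \<le> pp (Suc k)"
          then have "z (fb z')" using agree i1(2) by simp
          then show False using \<open>z \<in> K\<close> i1(1) unfolding K_def by blast
        qed
        then have "pp (Suc k) < fb z'" by simp
        then have "Suc k < blk (fb z')" by (simp add: blk_iff)
        then have kl: "k < blk (fb z') - 1" by simp
        have "w (node z') k = node z' ! k"
          using w_prop(1)[of "node z'"] kl unfolding Nbhd_def node_def by simp
        also have "\<dots> = z' (pp k)" using kl unfolding node_def dec_def by simp
        also have "\<dots> = z (pp k)" using agree[OF ppk] .
        finally show ?thesis using nK \<open>z \<in> K\<close> unfolding g_def dec_def by simp
      qed
    qed
    then show ?thesis by blast
  qed
qed

lemma wadge: "wadge_eq B A"
  unfolding wadge_eq_def wadge_le_def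
proof
  show "\<exists>f. continuous_on UNIV f \<and> B = f -` A"
    using g_cont unfolding B_def by blast
  have "A = hh -` B" using B_K[OF hh_K] by auto
  then show "\<exists>f. continuous_on UNIV f \<and> A = f -` B"
    using hh_cont by blast
qed

end




lemma Nbhd_cyl: "Nbhd s = cyl {..<length s} (\<lambda>i. s ! i)"
  unfolding Nbhd_def cyl_def by auto

lemma nbhd_sets:
  assumes "\<And>z. z \<in> U \<Longrightarrow> \<exists>n. cyl {..<n} z \<subseteq> U"
  shows "U \<in> sets mu"
proof -
  have "U = \<Union>(Nbhd ` {s. Nbhd s \<subseteq> U})"
  proof
    show "U \<subseteq> \<Union>(Nbhd ` {s. Nbhd s \<subseteq> U})"
    proof
      fix z assume "z \<in> U"
      then obtain n where n: "cyl {..<n} z \<subseteq> U" using assms by blast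
      then have "Nbhd (restr z n) \<subseteq> U" by (simp add: Nbhd_restr)
      moreover have "z \<in> Nbhd (restr z n)" by (simp add: Nbhd_restr)
      ultimately show "z \<in> \<Union>(Nbhd ` {s. Nbhd s \<subseteq> U})" by blast
    qed
  qed blast
  moreover have "\<Union>(Nbhd ` {s. Nbhd s \<subseteq> U}) \<in> sets mu"
  proof (rule sets.countable_Union)
    show "countable (Nbhd ` {s. Nbhd s \<subseteq> U})" by (intro countable_image countableI_type)
    show "Nbhd ` {s. Nbhd s \<subseteq> U} \<subseteq> sets mu"
      unfolding Nbhd_cyl by (auto intro: cyl_sets)
  qed
  ultimately show ?thesis by simp
qed

lemma measure_N: "measure mu (cyl {..<n} z) = (1/2) ^ n"
  by (subst measure_cyl) auto

lemma N_sets: "cyl {..<n} z \<in> sets mu"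
  by (rule cyl_sets) simp

lemma density_N: "density_seq X z n = measure mu (X \<inter> cyl {..<n} z) / (1/2) ^ n"
  unfolding density_seq_def Nbhd_restr measure_N ..

context constr
begin

lemma B_local:
  assumes "z \<notin> K" "z' \<in> cyl {..<Suc (fb z)} z"
  shows "z' \<notin> K" "z' \<in> B \<longleftrightarrow> z \<in> B"
  using local_notK[OF assms] B_nK assms(1) by auto

lemma BK_open: "open (B - K)"
proof (rule nbhd_open)
  fix z assume z: "z \<in> B - K"
  have "cyl {..<Suc (fb z)} z \<subseteq> B - K"
    using B_local[of z] z by blast
  then show "\<exists>n. cyl {..<n} z \<subseteq> B - K" by blast
qed

lemma BK_closed: "closed (B \<union> K)"
  unfolding closed_def
proof (rule nbhd_open)
  fix z assume z: "z \<in> - (B \<union> K)"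
  have "cyl {..<Suc (fb z)} z \<subseteq> - (B \<union> K)"
    using B_local[of z] z by blast
  then show "\<exists>n. cyl {..<n} z \<subseteq> - (B \<union> K)" by blast
qed

lemma BK_sets: "B - K \<in> sets mu"
  by (rule nbhd_sets) (use BK_open open_nbhd in blast)

lemma BiK_sets: "B \<inter> K \<in> sets mu"
  using completion.complete[of "B \<inter> K" K P] K_null unfolding mu_def by blast

lemma B_sets: "B \<in> sets mu"
proof -
  have "B = (B - K) \<union> (B \<inter> K)" by blast
  then show ?thesis using BK_sets BiK_sets by (metis sets.Un)
qed

lemma dens_notK:
  assumes "z \<notin> K"
  shows "density_seq B z \<longlonglongrightarrow> (if z \<in> B then 1 else 0)"
proof (rule tendsto_eventually)
  show "eventually (\<lambda>n. density_seq B z n = (if z \<in> B then 1 else 0)) sequentially"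
    unfolding eventually_sequentially
  proof (intro exI allI impI)
    fix n assume "Suc (fb z) \<le> n"
    then have sub: "cyl {..<n} z \<subseteq> cyl {..<Suc (fb z)} z" by (rule cyl_lessThan_mono)
    have pos: "(1/2::real) ^ n \<noteq> 0" by simp
    show "density_seq B z n = (if z \<in> B then 1 else 0)"
    proof (cases "z \<in> B")
      case True
      then have "B \<inter> cyl {..<n} z = cyl {..<n} z" using B_local[OF assms] sub by blast
      then show ?thesis using True pos by (simp add: density_N measure_N)
    next
      case False
      then have "B \<inter> cyl {..<n} z = {}" using B_local[OF assms] sub by blast
      then show ?thesis using False by (simp add: density_N)
    qed
  qed
qed

end




context constr
begin

lemma dens_K:
  assumes zK: "z \<in> K"
  shows "density_seq B z \<longlonglongrightarrow> (if z \<in> B then 1 else 0)"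
proof -
  define x where "x = dec z"
  define v where "v = (x \<in> A)"
  have zB: "z \<in> B \<longleftrightarrow> v" using B_K[OF zK] unfolding x_def v_def by simp
  obtain N0 where N0: "\<And>m. m \<ge> N0 \<Longrightarrow> c (restr x m) = v" using c_lim[of x] unfolding v_def by blast
  define e where "e = (\<lambda>l. (1/2::real) ^ (blk l))"
  have key: "\<bar>density_seq B z l - (if v then 1 else 0)\<bar> \<le> e l" if l: "Suc N0 \<le> blk l" for l
  proof -
    define n0 where "n0 = blk l"
    define L where "L = pp (Suc n0)"
    define J where "J = {..<L} - {pp n0}"
    define R where "R = cyl J z"
    define N where "N = cyl {..<l} z"
    have lpp: "l \<le> pp n0" unfolding n0_def by (rule blk_ge)
    have ppL: "pp n0 < L" unfolding L_def by simp
    have finJ: "finite J" unfolding J_def by simp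
    have cardJ: "card J = L - 1" unfolding J_def using ppL by (simp add: card_Diff_singleton)
    have mR: "measure mu R = (1/2) ^ (L - 1)" unfolding R_def using measure_cyl[OF finJ] cardJ by simp
    have mN: "measure mu N = (1/2) ^ l" unfolding N_def by (rule measure_N)
    have RN: "measure mu R \<le> e l * measure mu N"
    proof -
      have sq: "Suc n0 * Suc n0 = n0 * n0 + 2 * n0 + 1" by simp
      have "n0 + l \<le> L - 1" using lpp sq unfolding L_def pp_def by linarith
      then have "(1/2::real) ^ (L - 1) \<le> (1/2) ^ (n0 + l)" by (rule power_decreasing) auto
      then show ?thesis using mR mN unfolding e_def n0_def by (simp add: power_add)
    qed
    have Rsets: "R \<in> sets mu" unfolding R_def using finJ by (rule cyl_sets)
    have Nsets: "N \<in> sets mu" unfolding N_def by (rule N_sets)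
    have RsubN: "R \<subseteq> N" unfolding R_def N_def J_def using lpp ppL by (intro cyl_mono) auto
    have claim: "z' \<in> B \<longleftrightarrow> v" if z': "z' \<in> N - R" for z'
    proof -
      from z' obtain i where i: "i \<in> J" "z' i \<noteq> z i" unfolding R_def cyl_def by auto
      have agree: "\<And>j. j < l \<Longrightarrow> z' j = z j" using z' unfolding N_def cyl_def by auto
      have il: "l \<le> i" using agree i(2) not_le by blast
      have iL: "i < L" "i \<noteq> pp n0" using i(1) unfolding J_def by auto
      have inr: "i \<notin> range pp"
      proof
        assume "i \<in> range pp"
        then obtain j where j: "i = pp j" by auto
        have "\<not> pp j < l" using il j by simp
        then have "\<not> j < n0" unfolding n0_def by (simp add: blk_iff)
        moreover have "j < Suc n0" using iL(1) j unfolding L_def by simp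
        ultimately show False using iL(2) j by simp
      qed
      have "\<not> z i" using zK inr unfolding K_def by blast
      then have z'i: "z' i" using i(2) by simp
      have nK: "z' \<notin> K" using inr z'i unfolding K_def by blast
      have fbi: "fb z' \<le> i" using fb_le[of i z'] inr z'i by blast
      have fbl: "l \<le> fb z'"
      proof (rule ccontr)
        assume "\<not> l \<le> fb z'"
        then have lt: "fb z' < l" by simp
        have "z (fb z')" using fb_props(2)[OF nK] agree[OF lt] by simp
        then show False using zK fb_props(1)[OF nK] unfolding K_def by blast
      qed
      define m where "m = blk (fb z') - 1"
      have "n0 \<le> blk (fb z')" unfolding n0_def by (rule blk_mono[OF fbl])
      then have mge: "N0 \<le> m" using l unfolding n0_def m_def by simp
      have "blk (fb z') \<le> blk L" using fbi iL(1) by (intro blk_mono) simp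
      then have mle: "m \<le> n0" unfolding m_def L_def blk_pp by simp
      have "node z' = restr x m"
      proof -
        have "\<And>j. j < m \<Longrightarrow> dec z' j = x j"
        proof -
          fix j assume "j < m"
          then have "j < blk l" using mle unfolding n0_def by simp
          then have "pp j < l" by (simp add: blk_iff)
          then show "dec z' j = x j" unfolding dec_def x_def using agree by simp
        qed
        then show ?thesis unfolding node_def m_def[symmetric] by (simp add: restr_eq_iff)
      qed
      then show ?thesis using B_nK[OF nK] N0[OF mge] by simp
    qed
    have dens: "density_seq B z l = measure mu (B \<inter> N) / measure mu N"
      unfolding density_seq_def N_def Nbhd_restr ..
    have mNpos: "measure mu N > 0" using mN by simp
    show ?thesis
    proof (cases v)
      case True
      have "N - R \<subseteq> B \<inter> N" using claim True by blast
      then have a: "measure mu (N - R) \<le> measure mu (B \<inter> N)"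
        using B_sets Nsets by (intro MU.finite_measure_mono) auto
      have b: "measure mu (N - R) = measure mu N - measure mu R"
        using Nsets Rsets RsubN by (rule MU.finite_measure_Diff)
      have c: "measure mu (B \<inter> N) \<le> measure mu N"
        using Nsets by (intro MU.finite_measure_mono) auto
      have "measure mu N - e l * measure mu N \<le> measure mu (B \<inter> N)"
        using a b RN by linarith
      then have d1: "1 - e l \<le> measure mu (B \<inter> N) / measure mu N"
        using mNpos by (simp add: field_simps)
      have d2: "measure mu (B \<inter> N) / measure mu N \<le> 1"
        using c mNpos by (simp add: field_simps)
      show ?thesis using True dens d1 d2 by (simp add: abs_le_iff)
    next
      case False
      have "B \<inter> N \<subseteq> R" using claim False by blast
      then have "measure mu (B \<inter> N) \<le> measure mu R"
        using Rsets by (intro MU.finite_measure_mono)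
      then have "measure mu (B \<inter> N) \<le> e l * measure mu N" using RN by linarith
      then have d1: "measure mu (B \<inter> N) / measure mu N \<le> e l"
        using mNpos by (simp add: field_simps)
      have d2: "0 \<le> measure mu (B \<inter> N) / measure mu N" by simp
      show ?thesis using False dens d1 d2 by (simp add: abs_le_iff)
    qed
  qed
  have "eventually (\<lambda>l. Suc N0 \<le> blk l) sequentially"
    using blk_tends by (simp add: filterlim_at_top)
  then have ev: "eventually (\<lambda>l. norm (density_seq B z l - (if v then 1 else 0)) \<le> e l) sequentially"
  proof eventually_elim
    case (elim l)
    then show ?case using key[OF elim] by simp
  qed
  have p0: "(\<lambda>n. (1/2::real) ^ n) \<longlonglongrightarrow> 0" by (rule LIMSEQ_power_zero) simp
  have "e \<longlonglongrightarrow> 0" using filterlim_compose[OF p0 blk_tends] unfolding e_def .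
  then have "(\<lambda>l. density_seq B z l - (if v then 1 else 0)) \<longlonglongrightarrow> 0"
    by (rule Lim_null_comparison[OF ev])
  then have "density_seq B z \<longlonglongrightarrow> (if v then 1 else 0)" by (rule LIM_zero_cancel)
  then show ?thesis using zB by simp
qed

lemma dens_all: "density_seq B z \<longlonglongrightarrow> (if z \<in> B then 1 else 0)"
  using dens_K dens_notK by (cases "z \<in> K") auto

lemma has_density_B: "has_density B z 1 \<longleftrightarrow> z \<in> B"
proof
  assume h: "has_density B z 1"
  show "z \<in> B"
  proof (rule ccontr)
    assume "z \<notin> B"
    then have "density_seq B z \<longlonglongrightarrow> 0" using dens_all[of z] by simp
    moreover have "density_seq B z \<longlonglongrightarrow> 1" using h unfolding has_density_def .
    ultimately have "(0::real) = 1" by (rule LIMSEQ_unique)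
    then show False by simp
  qed
next
  assume "z \<in> B"
  then show "has_density B z 1" using dens_all[of z] unfolding has_density_def by simp
qed

lemma Phi_B: "Phi B = B"
  unfolding Phi_def using has_density_B by auto

lemma dualistic_B: "dualistic B"
  unfolding dualistic_def has_density_def
proof (intro conjI allI)
  show "B \<in> sets mu" by (rule B_sets)
  fix z show "density_seq B z \<longlonglongrightarrow> 0 \<or> density_seq B z \<longlonglongrightarrow> 1"
    using dens_all[of z] by (cases "z \<in> B") auto
qed

lemma KN_null: "K \<inter> Nbhd s \<in> null_sets mu"
proof (rule null_sets_subset[OF K_null])
  show "K \<inter> Nbhd s \<in> sets mu" using K_sets unfolding Nbhd_cyl by (intro sets.Int cyl_sets) auto
qed auto

lemma BN_sets: "B \<inter> Nbhd s \<in> sets mu"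
  using B_sets unfolding Nbhd_cyl by (intro sets.Int cyl_sets) auto

lemma dens_C: "density_seq (B \<union> K) z = density_seq B z"
proof
  fix n
  have "(B \<union> K) \<inter> Nbhd (restr z n) = (B \<inter> Nbhd (restr z n)) \<union> (K \<inter> Nbhd (restr z n))" by blast
  then have "measure mu ((B \<union> K) \<inter> Nbhd (restr z n)) = measure mu (B \<inter> Nbhd (restr z n))"
    using measure_Un_null_set[OF BN_sets KN_null] by simp
  then show "density_seq (B \<union> K) z n = density_seq B z n" unfolding density_seq_def by simp
qed

lemma dens_U: "density_seq (B - K) z = density_seq B z"
proof
  fix n
  have "(B - K) \<inter> Nbhd (restr z n) = (B \<inter> Nbhd (restr z n)) - (K \<inter> Nbhd (restr z n))" by blast
  then have "measure mu ((B - K) \<inter> Nbhd (restr z n)) = measure mu (B \<inter> Nbhd (restr z n))"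
    using measure_Diff_null_set[OF BN_sets KN_null] by simp
  then show "density_seq (B - K) z n = density_seq B z n" unfolding density_seq_def by simp
qed

lemma main: "\<exists>B C U. wadge_eq B A \<and> dualistic B \<and> closed C \<and> open U \<and> B = Phi C \<and> B = Phi U"
proof (intro exI conjI)
  show "wadge_eq B A" by (rule wadge)
  show "dualistic B" by (rule dualistic_B)
  show "closed (B \<union> K)" by (rule BK_closed)
  show "open (B - K)" by (rule BK_open)
  show "B = Phi (B \<union> K)" unfolding Phi_def has_density_def dens_C
    using Phi_B unfolding Phi_def has_density_def by simp
  show "B = Phi (B - K)" unfolding Phi_def has_density_def dens_U
    using Phi_B unfolding Phi_def has_density_def by simp
qed

end

theorem theorem5p3:
  fixes A :: "cantor set"
  assumes "Delta02 A"
  shows "\<exists>B C U. wadge_eq B A \<and> dualistic B \<and> closed C \<and> open U \<and>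
           B = Phi C \<and> B = Phi U"
proof -
  have fs: "fsigma_in euclidean A"
    using assms unfolding Delta02_def by (rule conjunct1)
  have gd: "gdelta_in euclidean A"
    using assms unfolding Delta02_def by (rule conjunct2)
  from fs[unfolded fsigma_in_ascending] obtain F :: "nat \<Rightarrow> cantor set" where
    F: "\<forall>n. closedin euclidean (F n)" "\<Union>(range F) = A"
    by (elim exE conjE) (rule that)
  have "fsigma_in euclidean (topspace euclidean - A)"
    using gd unfolding gdelta_in_fsigma_in by (rule conjunct2)
  moreover have "topspace euclidean - A = - A" by (simp add: Compl_eq_Diff_UNIV)
  ultimately have "fsigma_in euclidean (- A)" by simp
  from this[unfolded fsigma_in_ascending] obtain G :: "nat \<Rightarrow> cantor set" where
    G: "\<forall>n. closedin euclidean (G n)" "\<Union>(range G) = - A"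
    by (elim exE conjE) (rule that)
  have "constr A F G"
  proof
    show "\<And>i. closed (F i)" using F(1) closed_closedin by blast
    show "\<And>i. closed (G i)" using G(1) closed_closedin by blast
    show "A = (\<Union>i. F i)" using F(2) by simp
    show "- A = (\<Union>i. G i)" using G(2) by simp
  qed
  then show ?thesis by (rule constr.main)
qed



end
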